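(* Let $\mathcal H=\{h_1,\dots,h_k\}$ be an admissible set and $0\le\ell\le k$. If $d<R$ and $d$ is squarefree, then \[ |\lambda_{d,\ell}|\ll(\log R)^{k+\ell}, \] with implied constant depending only on $k$.
   Context: $\mathcal H$ is a set of $k\ge 2$ distinct integers and $P(n;\mathcal H)=\prod_{h\in\mathcal H}(n+h)$. For squarefree $d$, $\nu_d$ is the number of residue classes $a$ mod $d$ with $P(a;\mathcal H)\equiv0\pmod d$ (so $\nu_d=\prod_{p\mid d}\nu_p$). The set $\mathcal H$ is admissible if $\nu_p<p$ for all $p$. Let $\mathfrak S(\mathcal H)=\prod_p(1-\nu_p/p)(1-1/p)^{-k}$. For squarefree $d$, $f(d)=d/\nu_d$ and $f_1(d)=\prod_{p\mid d}(p-\nu_p)/\nu_p$. For $R>1$, \[ \lambda_{d,\ell}=\mu(d)\frac{f(d)}{f_1(d)}\frac{\mathfrak S(\mathcal H)}{\ell!}\sum_{\substack{r<R/d\\(r,d)=1}}\frac{\mu^2(r)}{f_1(r)}\Big(\log\frac{R}{rd}\Big)^\ell\quad (d<R). \] *)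

theory Defs
  imports "HOL-Analysis.Analysis" "HOL-Computational_Algebra.Primes" "HOL-Computational_Algebra.Squarefree"
begin

definition Ppoly :: "int set \<Rightarrow> int \<Rightarrow> int" where
  "Ppoly H n = (\<Prod>h\<in>H. n + h)"

definition nu :: "int set \<Rightarrow> nat \<Rightarrow> nat" where
  "nu H d = card {a::nat. a < d \<and> int d dvd Ppoly H (int a)}"

definition admissible :: "int set \<Rightarrow> bool" where
  "admissible H \<longleftrightarrow> (\<forall>p::nat. prime p \<longrightarrow> nu H p < p)"

definition sing_series :: "int set \<Rightarrow> real" where
  "sing_series H = lim (\<lambda>n. \<Prod>p\<in>{p::nat. prime p \<and> p \<le> n}.
       (1 - real (nu H p) / real p) * (1 - 1 / real p) powi (- int (card H)))"

definition ff :: "int set \<Rightarrow> nat \<Rightarrow> real" where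
  "ff H d = real d / real (nu H d)"

definition ff1 :: "int set \<Rightarrow> nat \<Rightarrow> real" where
  "ff1 H d = (\<Prod>p\<in>prime_factors d. (real p - real (nu H p)) / real (nu H p))"

definition mu :: "nat \<Rightarrow> int" where
  "mu n = (if squarefree n then (-1) ^ card (prime_factors n) else 0)"

definition lambda_w :: "int set \<Rightarrow> real \<Rightarrow> nat \<Rightarrow> nat \<Rightarrow> real" where
  "lambda_w H R d l = real_of_int (mu d) * ff H d / ff1 H d * sing_series H / fact l *
     (\<Sum>r\<in>{r::nat. 0 < r \<and> real r < R / real d \<and> coprime r d}.
        real_of_int ((mu r)\<^sup>2) / ff1 H r * (ln (R / (real r * real d))) ^ l)"

end

theory Submission
  imports Defs "HOL-Number_Theory.Cong"
begin

lemma prod_primes_dvd: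
  fixes n :: nat
  assumes "finite A" "\<forall>p\<in>A. prime p \<and> p dvd n"
  shows "(\<Prod>p\<in>A. p) dvd n"
  using assms
proof (induction A rule: finite_induct)
  case empty then show ?case by simp
next
  case (insert q A)
  have cop: "coprime q (\<Prod>p\<in>A. p)"
  proof -
    have "\<not> q dvd (\<Prod>p\<in>A. p)"
    proof
      assume "q dvd (\<Prod>p\<in>A. p)"
      then obtain x where "x \<in> A" "q dvd x"
        using prime_dvd_prod_iff[of A q "\<lambda>p. p"] insert by auto
      then have "q = x" using insert by (metis insert_iff primes_dvd_imp_eq)
      then show False using insert \<open>x\<in>A\<close> by simp
    qed
    then show ?thesis using insert prime_imp_coprime by auto
  qed
  have "q * (\<Prod>p\<in>A. p) dvd n"
    using insert cop by (intro divides_mult) auto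
  then show ?case using insert by simp
qed

lemma binom_le_4pow: "((2*m+1) choose m) \<le> (4::nat)^m"
proof -
  have e: "((2*m+1) choose m) = ((2*m+1) choose (m+1))"
    using binomial_symmetric[of m "2*m+1"] by simp
  have "((2*m+1) choose m) + ((2*m+1) choose (m+1)) \<le> (\<Sum>i\<in>{..2*m+1}. (2*m+1) choose i)"
  proof -
    have "(\<Sum>i\<in>{m, m+1}. (2*m+1) choose i) \<le> (\<Sum>i\<in>{..2*m+1}. (2*m+1) choose i)"
      by (intro sum_mono2) auto
    then show ?thesis by simp
  qed
  also have "\<dots> = 2^(2*m+1)" by (rule choose_row_sum)
  also have "\<dots> = 2 * 4^m" by (simp add: power_mult power_add)
  finally show ?thesis using e by simp
qed

lemma primorial_le: "(\<Prod>p\<in>{p::nat. prime p \<and> p \<le> n}. p) \<le> 4^n"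
proof (induction n rule: less_induct)
  case (less n)
  show ?case
  proof (cases "n \<le> 2")
    case True
    have e0: "{p::nat. prime p \<and> p \<le> 0} = {}" "{p::nat. prime p \<and> p \<le> 1} = {}"
      using prime_ge_2_nat by (auto simp del: prime_ge_2_nat dest: prime_ge_2_nat)
    have e2: "{p::nat. prime p \<and> p \<le> 2} = {2}"
    proof (intro equalityI subsetI)
      fix x assume "x \<in> {p::nat. prime p \<and> p \<le> 2}"
      then have "prime x" "x \<le> 2" by auto
      then have "x = 2" using prime_ge_2_nat[of x] by linarith
      then show "x \<in> {2}" by simp
    qed (simp add: two_is_prime_nat)
    have "n = 0 \<or> n = 1 \<or> n = 2" using True by linarith
    then show ?thesis
    proof (elim disjE)
      assume "n = 0" then show ?thesis unfolding \<open>n=0\<close> e0 by simp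
    next
      assume "n = 1" then show ?thesis unfolding \<open>n=1\<close> e0 by simp
    next
      assume "n = 2" then show ?thesis unfolding \<open>n=2\<close> e2 by simp
    qed
  next
    case False
    show ?thesis
    proof (cases "even n")
      case True
      then have np: "\<not> prime n" using False prime_odd_nat[of n] by auto
      have "{p::nat. prime p \<and> p \<le> n} = {p::nat. prime p \<and> p \<le> n-1}"
      proof (intro equalityI subsetI)
        fix x assume "x \<in> {p::nat. prime p \<and> p \<le> n}"
        then have x: "prime x" "x \<le> n" by auto
        then have "x \<noteq> n" using np by auto
        then show "x \<in> {p::nat. prime p \<and> p \<le> n-1}" using x by auto
      next
        fix x assume "x \<in> {p::nat. prime p \<and> p \<le> n-1}"
        then show "x \<in> {p::nat. prime p \<and> p \<le> n}" by auto
      qed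
      then have "(\<Prod>p\<in>{p::nat. prime p \<and> p \<le> n}. p) \<le> 4^(n-1)"
        using less[of "n-1"] False by simp
      also have "\<dots> \<le> 4^n" by (intro power_increasing) auto
      finally show ?thesis .
    next
      case odd: False
      then obtain m where n: "n = 2*m+1" by (metis oddE)
      have m1: "m \<ge> 1" using False n by simp
      have split: "{p::nat. prime p \<and> p \<le> n} = {p. prime p \<and> p \<le> m+1} \<union> {p. prime p \<and> m+1 < p \<and> p \<le> 2*m+1}"
        unfolding n by auto
      have fin1: "finite {p::nat. prime p \<and> p \<le> m+1}" by simp
      have fin2: "finite {p::nat. prime p \<and> m+1 < p \<and> p \<le> 2*m+1}" by simp
      have prodeq: "(\<Prod>p\<in>{p::nat. prime p \<and> p \<le> n}. p) =
          (\<Prod>p\<in>{p::nat. prime p \<and> p \<le> m+1}. p) * (\<Prod>p\<in>{p::nat. prime p \<and> m+1 < p \<and> p \<le> 2*m+1}. p)"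
        unfolding split by (rule prod.union_disjoint[OF fin1 fin2]) auto
      have A: "(\<Prod>p\<in>{p::nat. prime p \<and> p \<le> m+1}. p) \<le> 4^(m+1)"
        using less[of "m+1"] n m1 by simp
      have dv: "(\<Prod>p\<in>{p::nat. prime p \<and> m+1 < p \<and> p \<le> 2*m+1}. p) dvd ((2*m+1) choose m)"
      proof (rule prod_primes_dvd[OF fin2], safe)
        fix p :: nat assume p: "prime p" "m+1 < p" "p \<le> 2*m+1"
        have fe: "fact m * fact (2*m+1-m) * ((2*m+1) choose m) = (fact (2*m+1) :: nat)"
          by (rule binomial_fact_lemma) simp
        have "1 \<le> p" using prime_ge_1_nat p(1) by blast
        have "p dvd fact (2*m+1)" using dvd_fact[OF \<open>1 \<le> p\<close> p(3)] .
        moreover have "2*m+1-m = m+1" by simp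
        ultimately have "p dvd fact m * fact (m+1) * ((2*m+1) choose m)" using fe
          by (simp only:)
        moreover have "\<not> p dvd fact m" "\<not> p dvd fact (m+1)"
          using p by (simp_all only: prime_dvd_fact_iff[OF p(1)])
        ultimately show "p dvd ((2*m+1) choose m)" using p(1) by (auto simp: prime_dvd_mult_iff)
      qed
      have B: "(\<Prod>p\<in>{p::nat. prime p \<and> m+1 < p \<and> p \<le> 2*m+1}. p) \<le> 4^m"
        using dvd_imp_le[OF dv] binom_le_4pow[of m] by (simp add: zero_less_binomial)
      have "(\<Prod>p\<in>{p::nat. prime p \<and> p \<le> n}. p) \<le> 4^(m+1) * 4^m"
        unfolding prodeq by (intro mult_mono A B) auto
      also have "\<dots> = 4^((m+1)+m)" by (rule power_add[symmetric])
      also have "(m+1)+m = n" using n by simp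
      finally show ?thesis .
    qed
  qed
qed


definition Pr :: "nat \<Rightarrow> nat set" where "Pr n = {p. prime p \<and> p \<le> n}"

lemma finite_Pr[simp]: "finite (Pr n)" unfolding Pr_def by simp

lemma theta_le: "(\<Sum>p\<in>Pr n. ln (real p)) \<le> real n * ln 4"
proof -
  have pos: "\<And>p. p \<in> Pr n \<Longrightarrow> real p \<noteq> 0" unfolding Pr_def using prime_gt_0_nat by fastforce
  have "(\<Sum>p\<in>Pr n. ln (real p)) = ln (\<Prod>p\<in>Pr n. real p)"
    by (rule ln_prod[symmetric]) (use pos in auto)
  also have "(\<Prod>p\<in>Pr n. real p) = real (\<Prod>p\<in>Pr n. p)" by simp
  also have "ln (real (\<Prod>p\<in>Pr n. p)) \<le> ln (real (4^n))"
  proof (rule ln_mono)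
    show "real (\<Prod>p\<in>Pr n. p) \<le> real (4^n)" using primorial_le[of n] unfolding Pr_def by linarith
    have "(\<Prod>p\<in>Pr n. p) > 0" using pos by (intro prod_pos) (auto simp: Pr_def prime_gt_0_nat)
    then show "0 < real (\<Prod>p\<in>Pr n. p)" by (simp only: of_nat_0_less_iff)
  qed
  also have "ln (real (4^n)) = real n * ln 4" by (simp add: ln_realpow)
  finally show ?thesis .
qed

lemma ln_ge_sum_pf:
  assumes "j \<ge> 1"
  shows "(\<Sum>p\<in>prime_factors j. ln (real p)) \<le> ln (real j)"
proof -
  have dv: "(\<Prod>p\<in>prime_factors j. p) dvd j"
    by (rule prod_primes_dvd) auto
  have "(\<Prod>p\<in>prime_factors j. p) \<le> j" using dvd_imp_le[OF dv] assms by simp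
  moreover have "(\<Prod>p\<in>prime_factors j. p) > 0" by (intro prod_pos) (meson in_prime_factors_imp_prime prime_gt_0_nat)
  ultimately have "ln (real (\<Prod>p\<in>prime_factors j. p)) \<le> ln (real j)"
    by (intro ln_mono) (simp_all only: of_nat_le_iff of_nat_0_less_iff)
  moreover have "ln (real (\<Prod>p\<in>prime_factors j. p)) = (\<Sum>p\<in>prime_factors j. ln (real p))"
  proof -
    have "ln (real (\<Prod>p\<in>prime_factors j. p)) = ln (\<Prod>p\<in>prime_factors j. real p)" by simp
    also have "\<dots> = (\<Sum>p\<in>prime_factors j. ln (real p))"
      by (rule ln_prod) (use in_prime_factors_imp_prime prime_gt_0_nat in fastforce)+
    finally show ?thesis .
  qed
  ultimately show ?thesis by simp
qed

lemma card_multiples_ge: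
  assumes "p > 0"
  shows "n div p \<le> card {j\<in>{1..n}. p dvd j}"
proof -
  have "card {1..n div p} \<le> card {j\<in>{1..n}. p dvd j}"
  proof (rule card_inj_on_le)
    show "inj_on (\<lambda>i. i * p) {1..n div p}" using assms by (auto simp: inj_on_def)
    show "(\<lambda>i. i * p) ` {1..n div p} \<subseteq> {j\<in>{1..n}. p dvd j}"
    proof
      fix x assume "x \<in> (\<lambda>i. i * p) ` {1..n div p}"
      then obtain i where i: "i \<in> {1..n div p}" "x = i * p" by auto
      have "i * p \<le> (n div p) * p" using i by simp
      also have "\<dots> \<le> n" by simp
      finally have "x \<le> n" using i by simp
      moreover have "x \<ge> 1" using i assms by simp
      ultimately show "x \<in> {j\<in>{1..n}. p dvd j}" using i by auto
    qed
  qed simp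
  then show ?thesis by simp
qed

lemma mertens1:
  assumes "n \<ge> 1"
  shows "(\<Sum>p\<in>Pr n. ln (real p) / real p) \<le> ln (real n) + ln 4"
proof -
  define P where "P = Pr n"
  have lnfact: "(\<Sum>j\<in>{1..n}. ln (real j)) \<le> real n * ln (real n)"
  proof -
    have "(\<Sum>j\<in>{1..n}. ln (real j)) \<le> (\<Sum>j\<in>{1..n}. ln (real n))"
      by (intro sum_mono) auto
    then show ?thesis by simp
  qed
  have pfeq: "\<And>j. j \<in> {1..n} \<Longrightarrow> prime_factors j = {p\<in>P. p dvd j}"
  proof -
    fix j assume j: "j \<in> {1..n}"
    show "prime_factors j = {p\<in>P. p dvd j}"
    proof (intro equalityI subsetI)
      fix p assume "p \<in> prime_factors j"
      then have "prime p" "p dvd j" by auto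
      moreover have "p \<le> j" using dvd_imp_le[OF \<open>p dvd j\<close>] j by auto
      ultimately show "p \<in> {p\<in>P. p dvd j}" using j by (auto simp: P_def Pr_def)
    next
      fix p assume "p \<in> {p\<in>P. p dvd j}"
      then show "p \<in> prime_factors j" using j by (auto simp: P_def Pr_def prime_factors_dvd)
    qed
  qed
  have "(\<Sum>j\<in>{1..n}. \<Sum>p\<in>P. if p dvd j then ln (real p) else 0) \<le> (\<Sum>j\<in>{1..n}. ln (real j))"
  proof (rule sum_mono)
    fix j assume j: "j \<in> {1..n}"
    have "(\<Sum>p\<in>P. if p dvd j then ln (real p) else 0) = (\<Sum>p\<in>{p\<in>P. p dvd j}. ln (real p))"
      by (simp add: sum.inter_filter P_def)
    also have "\<dots> = (\<Sum>p\<in>prime_factors j. ln (real p))" using pfeq[OF j] by simp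
    also have "\<dots> \<le> ln (real j)" using ln_ge_sum_pf j by auto
    finally show "(\<Sum>p\<in>P. if p dvd j then ln (real p) else 0) \<le> ln (real j)" .
  qed
  moreover have "(\<Sum>j\<in>{1..n}. \<Sum>p\<in>P. if p dvd j then ln (real p) else 0)
      = (\<Sum>p\<in>P. ln (real p) * real (card {j\<in>{1..n}. p dvd j}))"
  proof -
    have "(\<Sum>j\<in>{1..n}. \<Sum>p\<in>P. if p dvd j then ln (real p) else 0)
        = (\<Sum>p\<in>P. \<Sum>j\<in>{1..n}. if p dvd j then ln (real p) else 0)" by (rule sum.swap)
    also have "\<dots> = (\<Sum>p\<in>P. ln (real p) * real (card {j\<in>{1..n}. p dvd j}))"
      by (intro sum.cong refl) (simp add: sum.If_cases; rule disjI2; rule arg_cong[where f=card]; auto)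
    finally show ?thesis .
  qed
  moreover have "(\<Sum>p\<in>P. ln (real p) * (real n / real p - 1)) \<le> (\<Sum>p\<in>P. ln (real p) * real (card {j\<in>{1..n}. p dvd j}))"
  proof (rule sum_mono)
    fix p assume p: "p \<in> P"
    then have pp: "prime p" by (auto simp: P_def Pr_def)
    then have p0: "p > 0" by (simp add: prime_gt_0_nat)
    have "real n / real p - 1 \<le> real (n div p)"
    proof -
      have "real n = real (n div p) * real p + real (n mod p)"
        by (metis div_mult_mod_eq of_nat_add of_nat_mult)
      moreover have "real (n mod p) < real p" using p0 by simp
      ultimately have "real n < (real (n div p) + 1) * real p" by (simp add: algebra_simps)
      then have "real n / real p < real (n div p) + 1" using p0 by (simp add: divide_less_eq)
      then show ?thesis by simp
    qed
    also have "\<dots> \<le> real (card {j\<in>{1..n}. p dvd j})" using card_multiples_ge[OF p0, of n] by simp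
    finally have "real n / real p - 1 \<le> real (card {j\<in>{1..n}. p dvd j})" .
    moreover have "ln (real p) \<ge> 0" using p0 by simp
    ultimately show "ln (real p) * (real n / real p - 1) \<le> ln (real p) * real (card {j\<in>{1..n}. p dvd j})"
      by (intro mult_left_mono) auto
  qed
  ultimately have "(\<Sum>p\<in>P. ln (real p) * (real n / real p - 1)) \<le> real n * ln (real n)"
    using lnfact by linarith
  moreover have "(\<Sum>p\<in>P. ln (real p) * (real n / real p - 1)) = real n * (\<Sum>p\<in>P. ln (real p) / real p) - (\<Sum>p\<in>P. ln (real p))"
    by (simp add: sum_distrib_left sum_subtractf algebra_simps)
  moreover have "(\<Sum>p\<in>P. ln (real p)) \<le> real n * ln 4" using theta_le by (simp add: P_def)
  ultimately have "real n * (\<Sum>p\<in>P. ln (real p) / real p) \<le> real n * (ln (real n) + ln 4)"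
    by (simp add: algebra_simps)
  then show ?thesis using assms by (simp add: P_def)
qed


lemma Pr_Suc: "Pr (Suc N) = (if prime (Suc N) then insert (Suc N) (Pr N) else Pr N)"
  unfolding Pr_def by (auto simp: le_Suc_eq)

lemma Suc_notin_Pr: "Suc N \<notin> Pr N" unfolding Pr_def by auto

lemma abel_step:
  "(\<Sum>p\<in>Pr (Suc N). 1 / real p) - (\<Sum>p\<in>Pr (Suc N). ln (real p) / real p) / ln (real (Suc N))
   = (\<Sum>p\<in>Pr N. 1 / real p) - (\<Sum>p\<in>Pr N. ln (real p) / real p) / ln (real (Suc N))"
proof (cases "prime (Suc N)")
  case True
  have l: "ln (real (Suc N)) > 0" using True prime_gt_1_nat[OF True] by simp
  have "(\<Sum>p\<in>Pr (Suc N). 1 / real p) = 1 / real (Suc N) + (\<Sum>p\<in>Pr N. 1 / real p)"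
    using True Suc_notin_Pr by (simp add: Pr_Suc)
  moreover have "(\<Sum>p\<in>Pr (Suc N). ln (real p) / real p) = ln (real (Suc N)) / real (Suc N) + (\<Sum>p\<in>Pr N. ln (real p) / real p)"
    using True Suc_notin_Pr by (simp add: Pr_Suc)
  ultimately show ?thesis using l by (simp add: add_divide_distrib)
next
  case False
  then show ?thesis by (simp add: Pr_Suc)
qed

lemma ln_diff_ge: fixes x y :: real assumes "0 < x" "x \<le> y" shows "1 - x / y \<le> ln y - ln x"
proof -
  have "ln (x / y) \<le> x / y - 1" using assms by (intro ln_le_minus_one) simp
  then show ?thesis using assms by (simp add: ln_div)
qed

lemma abel_bound:
  assumes "N \<ge> 2"
  shows "(\<Sum>p\<in>Pr N. 1 / real p) - (\<Sum>p\<in>Pr N. ln (real p) / real p) / ln (real N)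
     \<le> ln (ln (real N)) - ln (ln 2) + ln 4 * (1 / ln 2 - 1 / ln (real N))"
  using assms
proof (induction N rule: nat_induct_at_least)
  case base
  have "Pr 2 = {2}" unfolding Pr_def
  proof (intro equalityI subsetI)
    fix x assume "x \<in> {p::nat. prime p \<and> p \<le> 2}"
    then have "prime x" "x \<le> 2" by auto
    then have "x = 2" using prime_ge_2_nat[of x] by linarith
    then show "x \<in> {2}" by simp
  qed (simp add: two_is_prime_nat)
  then show ?case by simp
next
  case (Suc N)
  define A where "A = (\<Sum>p\<in>Pr N. ln (real p) / real p)"
  define S where "S = (\<Sum>p\<in>Pr N. 1 / real p)"
  have N1: "real N \<ge> 2" using Suc by simp
  have l0: "ln (real N) > 0" using N1 by simp
  have lmono: "ln (real N) \<le> ln (real (Suc N))" using N1 by simp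
  have l1: "ln (real (Suc N)) > 0" using N1 by simp
  have Ale: "A \<le> ln (real N) + ln 4" using mertens1[of N] Suc by (simp add: A_def)
  have dpos: "1 / ln (real N) - 1 / ln (real (Suc N)) \<ge> 0"
    using l0 lmono by (simp add: frac_le)
  have "S - A / ln (real (Suc N)) = (S - A / ln (real N)) + A * (1 / ln (real N) - 1 / ln (real (Suc N)))"
    by (simp add: algebra_simps)
  also have "A * (1 / ln (real N) - 1 / ln (real (Suc N))) \<le> (ln (real N) + ln 4) * (1 / ln (real N) - 1 / ln (real (Suc N)))"
    using Ale dpos by (intro mult_right_mono) auto
  also have "(ln (real N) + ln 4) * (1 / ln (real N) - 1 / ln (real (Suc N)))
      = (1 - ln (real N) / ln (real (Suc N))) + ln 4 * (1 / ln (real N) - 1 / ln (real (Suc N)))"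
    using l0 by (simp add: algebra_simps)
  also have "1 - ln (real N) / ln (real (Suc N)) \<le> ln (ln (real (Suc N))) - ln (ln (real N))"
    by (rule ln_diff_ge[OF l0 lmono])
  finally have "S - A / ln (real (Suc N)) \<le> (S - A / ln (real N)) + (ln (ln (real (Suc N))) - ln (ln (real N))) + ln 4 * (1 / ln (real N) - 1 / ln (real (Suc N)))"
    by simp
  moreover have "S - A / ln (real N) \<le> ln (ln (real N)) - ln (ln 2) + ln 4 * (1 / ln 2 - 1 / ln (real N))"
    using Suc by (simp add: A_def S_def)
  ultimately have "S - A / ln (real (Suc N)) \<le> ln (ln (real (Suc N))) - ln (ln 2) + ln 4 * (1 / ln 2 - 1 / ln (real (Suc N)))"
    by (simp add: algebra_simps)
  then show ?case using abel_step[of N] by (simp add: A_def S_def)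
qed


lemma mertens2:
  assumes "N \<ge> 2"
  shows "(\<Sum>p\<in>Pr N. 1 / real p) \<le> ln (ln (real N)) + (1 + 2 * ln 4 / ln 2 - ln (ln 2))"
proof -
  have l2: "ln (real N) \<ge> ln 2" using assms by simp
  have l0: "ln (real N) > 0" using assms by simp
  have A: "(\<Sum>p\<in>Pr N. ln (real p) / real p) \<le> ln (real N) + ln 4" using mertens1[of N] assms by simp
  have "(\<Sum>p\<in>Pr N. ln (real p) / real p) / ln (real N) \<le> (ln (real N) + ln 4) / ln (real N)"
    using A l0 by (intro divide_right_mono) auto
  also have "\<dots> = 1 + ln 4 / ln (real N)" using l0 by (simp add: add_divide_distrib)
  also have "ln 4 / ln (real N) \<le> ln 4 / ln 2" using l2 l0 by (intro divide_left_mono mult_pos_pos) auto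
  finally have B: "(\<Sum>p\<in>Pr N. ln (real p) / real p) / ln (real N) \<le> 1 + ln 4 / ln 2" by simp
  have C: "ln 4 * (1 / ln 2 - 1 / ln (real N)) \<le> ln 4 / ln 2" using l0 by (simp add: right_diff_distrib)
  show ?thesis using abel_bound[OF assms] B C by linarith
qed

lemma telescope_sum: "N \<ge> 1 \<Longrightarrow> (\<Sum>j\<in>{2..N}. 1 / (real j * (real j - 1))) = 1 - 1 / real N"
proof (induction N rule: nat_induct_at_least)
  case base then show ?case by simp
next
  case (Suc N)
  have "{2..Suc N} = insert (Suc N) {2..N}" using Suc by auto
  then have "(\<Sum>j\<in>{2..Suc N}. 1 / (real j * (real j - 1))) = 1 / (real (Suc N) * real N) + (1 - 1 / real N)"
    using Suc by simp
  also have "\<dots> = 1 - 1 / real (Suc N)"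
  proof -
    have "real N > 0" using Suc by simp
    then show ?thesis by (simp add: divide_simps) (simp add: algebra_simps)
  qed
  finally show ?case .
qed

lemma sum_pp1_le: "(\<Sum>p\<in>Pr N. 1 / (real p * (real p - 1))) \<le> 1"
proof (cases "N \<ge> 1")
  case True
  have "(\<Sum>p\<in>Pr N. 1 / (real p * (real p - 1))) \<le> (\<Sum>j\<in>{2..N}. 1 / (real j * (real j - 1)))"
  proof (rule sum_mono2)
    show "Pr N \<subseteq> {2..N}"
    proof
      fix x assume "x \<in> Pr N"
      then have "prime x" "x \<le> N" unfolding Pr_def by auto
      then show "x \<in> {2..N}" using prime_ge_2_nat[of x] by simp
    qed
    fix j assume "j \<in> {2..N} - Pr N"
    then have "real j \<ge> 2" by auto
    then show "0 \<le> 1 / (real j * (real j - 1))" by simp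
  qed simp
  also have "\<dots> \<le> 1" using telescope_sum[OF True] by simp
  finally show ?thesis .
next
  case False
  have "Pr N = {}"
  proof (rule ccontr)
    assume "Pr N \<noteq> {}"
    then obtain x where "x \<in> Pr N" by auto
    then have "prime x" "x \<le> N" unfolding Pr_def by auto
    then show False using prime_ge_2_nat[of x] False by simp
  qed
  then show ?thesis by simp
qed

definition mertQQ :: "real" where "mertQQ = exp (2 + 2 * ln 4 / ln 2 - ln (ln 2))"

lemma mertens3:
  assumes "N \<ge> 2"
  shows "(\<Prod>p\<in>Pr N. inverse (1 - 1 / real p)) \<le> mertQQ * ln (real N)"
proof -
  have pp: "\<And>p. p \<in> Pr N \<Longrightarrow> real p \<ge> 2"
  proof -
    fix p assume "p \<in> Pr N"
    then have "prime p" unfolding Pr_def by auto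
    then show "real p \<ge> 2" using prime_ge_2_nat[of p] by simp
  qed
  have pos: "\<And>p. p \<in> Pr N \<Longrightarrow> inverse (1 - 1 / real p) > 0"
  proof -
    fix p assume "p \<in> Pr N"
    then have "real p \<ge> 2" by (rule pp)
    then have "1 / real p < 1" by simp
    then show "inverse (1 - 1 / real p) > 0" by simp
  qed
  have Qpos: "(\<Prod>p\<in>Pr N. inverse (1 - 1 / real p)) > 0" using pos by (intro prod_pos) auto
  have "ln (\<Prod>p\<in>Pr N. inverse (1 - 1 / real p)) = (\<Sum>p\<in>Pr N. ln (inverse (1 - 1 / real p)))"
    by (rule ln_prod) (use pos in \<open>simp_all only: finite_Pr less_irrefl\<close>, metis less_irrefl)
  also have "\<dots> \<le> (\<Sum>p\<in>Pr N. 1 / real p + 1 / (real p * (real p - 1)))"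
  proof (rule sum_mono)
    fix p assume p: "p \<in> Pr N"
    have p2: "real p \<ge> 2" using pp[OF p] .
    have "ln (inverse (1 - 1 / real p)) \<le> inverse (1 - 1 / real p) - 1"
      using pos[OF p] by (rule ln_le_minus_one)
    also have "inverse (1 - 1 / real p) - 1 = 1 / real p + 1 / (real p * (real p - 1))"
      using p2 by (simp add: field_simps)
    finally show "ln (inverse (1 - 1 / real p)) \<le> 1 / real p + 1 / (real p * (real p - 1))" .
  qed
  also have "\<dots> = (\<Sum>p\<in>Pr N. 1 / real p) + (\<Sum>p\<in>Pr N. 1 / (real p * (real p - 1)))"
    by (rule sum.distrib)
  also have "\<dots> \<le> ln (ln (real N)) + (2 + 2 * ln 4 / ln 2 - ln (ln 2))"
    using mertens2[OF assms] sum_pp1_le[of N] by simp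
  finally have L: "ln (\<Prod>p\<in>Pr N. inverse (1 - 1 / real p)) \<le> ln (ln (real N)) + (2 + 2 * ln 4 / ln 2 - ln (ln 2))" .
  have lN: "ln (real N) > 0" using assms by simp
  have "(\<Prod>p\<in>Pr N. inverse (1 - 1 / real p)) = exp (ln (\<Prod>p\<in>Pr N. inverse (1 - 1 / real p)))"
    using Qpos by simp
  also have "\<dots> \<le> exp (ln (ln (real N)) + (2 + 2 * ln 4 / ln 2 - ln (ln 2)))"
    using L by simp
  also have "\<dots> = ln (real N) * mertQQ" unfolding mertQQ_def using lN by (simp add: exp_add)
  finally show ?thesis by (simp add: mult.commute)
qed

lemma Ppoly_mod:
  fixes m :: int
  shows "Ppoly H x mod m = Ppoly H (x mod m) mod m"
proof -
  have "[Ppoly H x = Ppoly H (x mod m)] (mod m)"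
    unfolding Ppoly_def
    by (rule cong_prod, rule cong_add) (simp_all add: cong_def)
  then show ?thesis by (simp add: cong_def)
qed

lemma Ppoly_dvd_mod:
  fixes m a :: nat
  shows "int m dvd Ppoly H (int a) \<longleftrightarrow> int m dvd Ppoly H (int (a mod m))"
proof -
  have "int (a mod m) = int a mod int m" by (simp add: zmod_int)
  then show ?thesis using Ppoly_mod[of H "int a" "int m"]
    by (metis dvd_eq_mod_eq_0)
qed

definition roots :: "int set \<Rightarrow> nat \<Rightarrow> nat set" where
  "roots H d = {a::nat. a < d \<and> int d dvd Ppoly H (int a)}"

lemma nu_roots: "nu H d = card (roots H d)" unfolding nu_def roots_def ..

lemma nu_mult:
  assumes cop: "coprime m n" and m0: "m > 0" and n0: "n > 0"
  shows "nu H (m * n) = nu H m * nu H n"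
proof -
  have bij: "bij_betw (\<lambda>x. (x mod m, x mod n)) (roots H (m * n)) (roots H m \<times> roots H n)"
    unfolding bij_betw_def
  proof
    show "inj_on (\<lambda>x. (x mod m, x mod n)) (roots H (m * n))"
    proof (intro inj_onI, clarify)
      fix x y assume xy: "x \<in> roots H (m * n)" "y \<in> roots H (m * n)"
                         "x mod m = y mod m" "x mod n = y mod n"
      have ex: "\<exists>!z. z < m * n \<and> [z = x] (mod m) \<and> [z = x] (mod n)"
        by (rule binary_chinese_remainder_unique_nat) (use cop m0 n0 in simp_all)
      have "x < m * n \<and> [x = x] (mod m) \<and> [x = x] (mod n)"
           "y < m * n \<and> [y = x] (mod m) \<and> [y = x] (mod n)"
        using xy by (simp_all add: roots_def cong_def)
      from this[THEN the1_equality[OF ex]] show "x = y" by simp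
    qed
  next
    show "(\<lambda>x. (x mod m, x mod n)) ` roots H (m * n) = roots H m \<times> roots H n"
    proof safe
      fix x assume x: "x \<in> roots H (m * n)"
      then have "int (m * n) dvd Ppoly H (int x)" by (simp add: roots_def)
      then have "int m dvd Ppoly H (int x)" "int n dvd Ppoly H (int x)"
        by (auto intro: dvd_mult_left dvd_mult_right)
      then show "x mod m \<in> roots H m" "x mod n \<in> roots H n"
        using m0 n0 Ppoly_dvd_mod[of m H x] Ppoly_dvd_mod[of n H x] by (auto simp: roots_def)
    next
      fix a b assume ab: "a \<in> roots H m" "b \<in> roots H n"
      then have ab': "a < m" "b < n" by (auto simp: roots_def)
      from binary_chinese_remainder_unique_nat[OF cop, of a b] m0 n0 obtain x
        where x: "x < m * n" "x mod m = a" "x mod n = b" using ab' by (auto simp: cong_def)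
      have "int m dvd Ppoly H (int x)" "int n dvd Ppoly H (int x)"
        using ab x Ppoly_dvd_mod[of m H x] Ppoly_dvd_mod[of n H x] by (auto simp: roots_def)
      moreover have "coprime (int m) (int n)" using cop by simp
      ultimately have "int m * int n dvd Ppoly H (int x)" by (rule divides_mult)
      then have "x \<in> roots H (m * n)" using x by (simp add: roots_def)
      with x show "(a, b) \<in> (\<lambda>x. (x mod m, x mod n)) ` roots H (m * n)" by force
    qed
  qed
  have "nu H (m * n) = card (roots H m \<times> roots H n)"
    unfolding nu_roots by (rule bij_betw_same_card[OF bij])
  also have "\<dots> = nu H m * nu H n" by (simp add: card_cartesian_product nu_roots)
  finally show ?thesis .
qed

lemma nu_1: "nu H 1 = 1"
proof -
  have "nu H 1 = card {0::nat}" unfolding nu_def by (rule arg_cong[where f=card]) auto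
  then show ?thesis by simp
qed

lemma nu_prod_primes:
  assumes "finite A" "\<forall>p\<in>A. prime (p::nat)"
  shows "nu H (\<Prod>A) = (\<Prod>p\<in>A. nu H p)"
  using assms
proof (induction A rule: finite_induct)
  case empty then show ?case using nu_1 by (metis prod.empty)
next
  case (insert q A)
  have cop: "coprime q (\<Prod>A)"
  proof -
    have "\<not> q dvd (\<Prod>p\<in>A. p)"
    proof
      assume "q dvd (\<Prod>p\<in>A. p)"
      then obtain x where "x \<in> A" "q dvd x"
        using prime_dvd_prod_iff[of A q "\<lambda>p. p"] insert by auto
      then have "q = x" using insert by (metis insert_iff primes_dvd_imp_eq)
      then show False using insert \<open>x\<in>A\<close> by simp
    qed
    then show ?thesis using insert prime_imp_coprime by auto
  qed
  have q0: "q > 0" using insert prime_gt_0_nat by auto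
  have A0: "\<Prod>A > 0" using insert by (intro prod_pos) (auto simp: prime_gt_0_nat)
  have "nu H (\<Prod>(insert q A)) = nu H (q * \<Prod>A)" using insert by simp
  also have "\<dots> = nu H q * nu H (\<Prod>A)" by (rule nu_mult[OF cop q0 A0])
  finally show ?case using insert by simp
qed

lemma squarefree_prod_pf:
  fixes d :: nat
  assumes "squarefree d"
  shows "\<Prod>(prime_factors d) = d"
proof -
  have d0: "d \<noteq> 0" using assms by (metis not_squarefree_0)
  have "(\<Prod>p\<in>prime_factors d. p ^ multiplicity p d) = d"
    using prod_prime_factors[OF d0] by simp
  moreover have "\<And>p. p \<in> prime_factors d \<Longrightarrow> multiplicity p d = 1"
    using assms d0 squarefree_factorial_semiring'[of d] by auto
  ultimately show ?thesis by simp
qed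

lemma nu_squarefree:
  fixes d :: nat
  assumes "squarefree d"
  shows "nu H d = (\<Prod>p\<in>prime_factors d. nu H p)"
  using nu_prod_primes[of "prime_factors d" H] squarefree_prod_pf[OF assms] by auto

lemma roots_prime:
  assumes p: "prime p" and fin: "finite H"
  shows "roots H p = (\<lambda>h. nat ((- h) mod int p)) ` H"
proof -
  have pi: "prime (int p)" using p by simp
  have p0: "int p > 0" using p prime_gt_0_nat by simp
  have key: "\<And>a h. a < p \<Longrightarrow> (int p dvd int a + h \<longleftrightarrow> a = nat ((- h) mod int p))"
  proof -
    fix a h assume a: "a < p"
    have "int p dvd int a + h \<longleftrightarrow> int a mod int p = (- h) mod int p"
      by (metis add.commute add_uminus_conv_diff dvd_minus_mod minus_add_cancel mod_eq_dvd_iff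
          diff_minus_eq_add)
    also have "int a mod int p = int a" using a by simp
    also have "int a = (- h) mod int p \<longleftrightarrow> a = nat ((- h) mod int p)"
      using p0 by (metis nat_int of_nat_0_le_iff pos_mod_sign int_nat_eq)
    finally show "int p dvd int a + h \<longleftrightarrow> a = nat ((- h) mod int p)" .
  qed
  show ?thesis
  proof (intro equalityI subsetI)
    fix a assume "a \<in> roots H p"
    then have a: "a < p" "int p dvd (\<Prod>h\<in>H. int a + h)" by (auto simp: roots_def Ppoly_def)
    then obtain h where "h \<in> H" "int p dvd int a + h" using prime_dvd_prod_iff[OF fin pi] by auto
    then show "a \<in> (\<lambda>h. nat ((- h) mod int p)) ` H" using key[OF a(1)] by auto
  next
    fix a assume "a \<in> (\<lambda>h. nat ((- h) mod int p)) ` H"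
    then obtain h where h: "h \<in> H" "a = nat ((- h) mod int p)" by auto
    have "nat ((- h) mod int p) < p" using p0
      by (metis Euclidean_Rings.pos_mod_bound nat_less_iff of_nat_0_le_iff pos_mod_sign zless_nat_eq_int_zless)
    then have a: "a < p" using h by simp
    have "int p dvd int a + h" using key[OF a] h by simp
    then have "int p dvd (\<Prod>h\<in>H. int a + h)" using h(1) fin by (meson dvd_prodI dvd_trans)
    then show "a \<in> roots H p" using a by (simp add: roots_def Ppoly_def)
  qed
qed

lemma nu_le_card:
  assumes "prime p" "finite H"
  shows "nu H p \<le> card H"
  unfolding nu_roots roots_prime[OF assms] by (rule card_image_le[OF assms(2)])

lemma nu_pos:
  assumes "prime p" "finite H" "H \<noteq> {}"
  shows "nu H p \<ge> 1"
proof -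
  have "roots H p \<noteq> {}" unfolding roots_prime[OF assms(1,2)] using assms(3) by simp
  moreover have "finite (roots H p)" unfolding roots_prime[OF assms(1,2)] using assms(2) by simp
  ultimately show ?thesis unfolding nu_roots by (simp add: Suc_le_eq card_gt_0_iff)
qed

definition bigM :: "int set \<Rightarrow> nat" where "bigM H = nat (2 * (\<Sum>h\<in>H. \<bar>h\<bar>))"

lemma nu_big:
  assumes p: "prime p" and fin: "finite H" and big: "p > bigM H"
  shows "nu H p = card H"
proof -
  have p0: "int p > 0" using p prime_gt_0_nat by simp
  have "inj_on (\<lambda>h. nat ((- h) mod int p)) H"
  proof (rule inj_onI)
    fix x y assume xy: "x \<in> H" "y \<in> H" "nat ((- x) mod int p) = nat ((- y) mod int p)"
    then have "(- x) mod int p = (- y) mod int p" using p0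
      by (metis nat_eq_iff2 pos_mod_sign)
    then have dv: "int p dvd (- x) - (- y)" by (simp add: mod_eq_dvd_iff)
    show "x = y"
    proof (rule ccontr)
      assume "x \<noteq> y"
      then have "(- x) - (- y) \<noteq> 0" by simp
      from dvd_imp_le_int[OF this dv] have "int p \<le> \<bar>x - y\<bar>" by simp
      moreover have "\<bar>x - y\<bar> \<le> \<bar>x\<bar> + \<bar>y\<bar>" by simp
      moreover have "\<bar>x\<bar> \<le> (\<Sum>h\<in>H. \<bar>h\<bar>)" "\<bar>y\<bar> \<le> (\<Sum>h\<in>H. \<bar>h\<bar>)"
        using xy fin by (auto intro: member_le_sum)
      moreover have "int p > 2 * (\<Sum>h\<in>H. \<bar>h\<bar>)" using big unfolding bigM_def by linarith
      ultimately show False by linarith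
    qed
  qed
  then show ?thesis unfolding nu_roots roots_prime[OF p fin] by (rule card_image)
qed

definition fac :: "int set \<Rightarrow> nat \<Rightarrow> real" where
  "fac H p = (1 - real (nu H p) / real p) * (1 - 1 / real p) powi (- int (card H))"

definition Pn :: "int set \<Rightarrow> nat \<Rightarrow> real" where
  "Pn H n = (\<Prod>p\<in>Pr n. fac H p)"

lemma sing_series_Pn: "sing_series H = lim (Pn H)"
  unfolding sing_series_def Pn_def fac_def Pr_def ..

lemma fac_alt: "fac H p = (1 - real (nu H p) / real p) * inverse ((1 - 1 / real p) ^ card H)"
  unfolding fac_def by (simp add: power_int_minus)

lemma fac_pos:
  assumes "prime p" "admissible H"
  shows "fac H p > 0"
proof -
  have "nu H p < p" using assms unfolding admissible_def by auto
  then have a: "real (nu H p) / real p < 1" using assms prime_gt_0_nat by (simp add: divide_less_eq)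
  have "real p \<ge> 2" using prime_ge_2_nat[OF assms(1)] by simp
  then have b: "1 - 1 / real p > 0" by simp
  show ?thesis unfolding fac_alt using a b by simp
qed

lemma fac_le1:
  assumes "prime p" "finite H" "p > bigM H"
  shows "fac H p \<le> 1"
proof -
  have nu: "nu H p = card H" by (rule nu_big[OF assms])
  have p2: "real p \<ge> 2" using prime_ge_2_nat[OF assms(1)] by simp
  have b: "1 - 1 / real p > 0" using p2 by simp
  have "1 + real (card H) * (- 1 / real p) \<le> (1 + (- 1 / real p)) ^ card H"
    by (rule Bernoulli_inequality) (use p2 in simp)
  then have "1 - real (card H) / real p \<le> (1 - 1 / real p) ^ card H" by simp
  moreover have "(1 - 1 / real p) ^ card H > 0" using b by simp
  ultimately show ?thesis unfolding fac_alt nu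
    by (simp add: divide_simps)
qed

lemma Pn_Suc: "Pn H (Suc n) = (if prime (Suc n) then fac H (Suc n) * Pn H n else Pn H n)"
  unfolding Pn_def Pr_Suc using Suc_notin_Pr by simp

lemma Pn_pos:
  assumes "admissible H"
  shows "Pn H n > 0"
  unfolding Pn_def by (rule prod_pos) (use fac_pos assms in \<open>auto simp: Pr_def\<close>)

lemma sing_bounds:
  assumes fin: "finite H" and adm: "admissible H"
  shows "sing_series H \<ge> 0" "\<And>n. n \<ge> bigM H \<Longrightarrow> sing_series H \<le> Pn H n"
proof -
  define M where "M = bigM H"
  define X where "X = (\<lambda>i. Pn H (i + M))"
  have dec: "decseq X"
  proof (rule decseq_SucI)
    fix i
    show "X (Suc i) \<le> X i"
    proof (cases "prime (Suc (i + M))")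
      case True
      have "fac H (Suc (i + M)) \<le> 1" by (rule fac_le1[OF True fin]) (simp add: M_def)
      moreover have "Pn H (i + M) > 0" by (rule Pn_pos[OF adm])
      ultimately have "fac H (Suc (i + M)) * Pn H (i + M) \<le> 1 * Pn H (i + M)"
        by (intro mult_right_mono) auto
      then show ?thesis unfolding X_def using True Pn_Suc[of H "i + M"] by simp
    next
      case False
      then show ?thesis unfolding X_def using Pn_Suc[of H "i + M"] by simp
    qed
  qed
  have lb: "\<forall>i. 0 \<le> X i" unfolding X_def using Pn_pos[OF adm] less_imp_le by blast
  obtain L where L: "X \<longlonglongrightarrow> L" "\<forall>i. L \<le> X i" using decseq_convergent[OF dec lb] by blast
  have "Pn H \<longlonglongrightarrow> L" using L(1) unfolding X_def by (rule LIMSEQ_offset)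
  then have S: "sing_series H = L" unfolding sing_series_Pn by (rule limI)
  show "sing_series H \<ge> 0" unfolding S using L(1) lb by (intro LIMSEQ_le_const) auto
  fix n assume "n \<ge> bigM H"
  then have "n = (n - M) + M" by (simp add: M_def)
  then have "Pn H n = X (n - M)" unfolding X_def by simp
  then show "sing_series H \<le> Pn H n" unfolding S using L(2) by simp
qed

definition gg :: "int set \<Rightarrow> nat \<Rightarrow> real" where
  "gg H p = real (nu H p) / (real p - real (nu H p))"

lemma inv_ff1: "1 / ff1 H r = (\<Prod>p\<in>prime_factors r. gg H p)"
proof -
  have "1 / ff1 H r = (\<Prod>p\<in>prime_factors r. (1::real)) / ff1 H r" by simp
  also have "\<dots> = (\<Prod>p\<in>prime_factors r. 1 / ((real p - real (nu H p)) / real (nu H p)))"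
    unfolding ff1_def by (rule prod_dividef[symmetric])
  also have "\<dots> = (\<Prod>p\<in>prime_factors r. gg H p)" unfolding gg_def by simp
  finally show ?thesis .
qed

lemma gg_nonneg:
  assumes "prime p" "admissible H"
  shows "gg H p \<ge> 0"
proof -
  have "nu H p < p" using assms unfolding admissible_def by auto
  then show ?thesis unfolding gg_def by simp
qed

lemma one_plus_gg:
  assumes "prime p" "admissible H"
  shows "1 + gg H p = real p / (real p - real (nu H p))"
proof -
  have "nu H p < p" using assms unfolding admissible_def by auto
  then have "real p - real (nu H p) > 0" by simp
  then show ?thesis unfolding gg_def by (simp add: field_simps)
qed

lemma ff_over_ff1:
  assumes sq: "squarefree d" and fin: "finite H" and adm: "admissible H" and ne: "H \<noteq> {}"
  shows "ff H d / ff1 H d = (\<Prod>p\<in>prime_factors d. 1 + gg H p)"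
proof -
  have dd: "real d = (\<Prod>p\<in>prime_factors d. real p)"
  proof -
    have "real d = real (\<Prod>(prime_factors d))" using squarefree_prod_pf[OF sq] by simp
    also have "\<dots> = (\<Prod>p\<in>prime_factors d. real p)" by (rule of_nat_prod)
    finally show ?thesis .
  qed
  have nd: "real (nu H d) = (\<Prod>p\<in>prime_factors d. real (nu H p))"
  proof -
    have "real (nu H d) = real (\<Prod>p\<in>prime_factors d. nu H p)" using nu_squarefree[OF sq, of H] by (rule arg_cong)
    also have "\<dots> = (\<Prod>p\<in>prime_factors d. real (nu H p))" by (rule of_nat_prod)
    finally show ?thesis .
  qed
  have ffe: "ff H d = (\<Prod>p\<in>prime_factors d. real p / real (nu H p))"
    unfolding ff_def dd nd by (rule prod_dividef[symmetric])
  have "ff H d / ff1 H d = (\<Prod>p\<in>prime_factors d. (real p / real (nu H p)) / ((real p - real (nu H p)) / real (nu H p)))"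
    unfolding ff1_def ffe by (rule prod_dividef[symmetric])
  also have "\<dots> = (\<Prod>p\<in>prime_factors d. 1 + gg H p)"
  proof (rule prod.cong[OF refl])
    fix p assume "p \<in> prime_factors d"
    then have p: "prime p" by auto
    have "nu H p \<ge> 1" by (rule nu_pos[OF p fin ne])
    then have "real (nu H p) \<noteq> 0" by simp
    then show "(real p / real (nu H p)) / ((real p - real (nu H p)) / real (nu H p)) = 1 + gg H p"
      unfolding one_plus_gg[OF p adm] by simp
  qed
  finally show ?thesis .
qed

lemma mu_sq: "(real_of_int (mu r))\<^sup>2 = (if squarefree r then 1 else 0)"
  unfolding mu_def by (simp add: power_mult[symmetric])

lemma abs_mu_le: "\<bar>real_of_int (mu r)\<bar> \<le> 1"
  unfolding mu_def by simp


lemma sum_bound: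
  assumes fin: "finite H" and adm: "admissible H" and d0: "d > 0" and R1: "R > 1"
  shows "(\<Sum>r\<in>{r::nat. 0 < r \<and> real r < R / real d \<and> coprime r d}.
            real_of_int ((mu r)\<^sup>2) / ff1 H r * (ln (R / (real r * real d))) ^ l)
         \<le> (ln R) ^ l * (\<Prod>p\<in>{p\<in>Pr (nat \<lfloor>R\<rfloor>). \<not> p dvd d}. 1 + gg H p)"
proof -
  define N where "N = nat \<lfloor>R\<rfloor>"
  define A where "A = {r::nat. 0 < r \<and> real r < R / real d \<and> coprime r d}"
  define T where "T = {p\<in>Pr N. \<not> p dvd d}"
  define F where "F = (\<lambda>S. \<Prod>p\<in>S. gg H p)"
  define A' where "A' = {r\<in>A. squarefree r}"
  have lnR: "ln R > 0" using R1 by simp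
  have rN: "\<And>r. r \<in> A \<Longrightarrow> r \<le> N"
  proof -
    fix r assume "r \<in> A"
    then have "real r < R / real d" by (simp add: A_def)
    also have "\<dots> \<le> R" using d0 R1 by (simp add: divide_le_eq)
    finally have "real r < R" .
    then have "int r \<le> \<lfloor>R\<rfloor>" by linarith
    then show "r \<le> N" unfolding N_def by linarith
  qed
  have finA: "finite A" using rN by (intro finite_subset[of A "{..N}"]) auto
  have finT: "finite T" unfolding T_def by simp
  have Fnn: "\<And>S. S \<subseteq> T \<Longrightarrow> F S \<ge> 0"
    unfolding F_def T_def Pr_def by (intro prod_nonneg) (use gg_nonneg adm in auto)
  have Fnn': "\<And>r. F (prime_factors r) \<ge> 0"
    unfolding F_def by (intro prod_nonneg) (use gg_nonneg adm in auto)
  have step1: "(\<Sum>r\<in>A. real_of_int ((mu r)\<^sup>2) / ff1 H r * (ln (R / (real r * real d))) ^ l)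
      \<le> (\<Sum>r\<in>A. (ln R) ^ l * (if squarefree r then F (prime_factors r) else 0))"
  proof (rule sum_mono)
    fix r assume r: "r \<in> A"
    have r0: "real r \<ge> 1" using r by (simp add: A_def)
    have rd: "real r * real d < R" using r d0 by (simp add: A_def pos_less_divide_eq)
    have d1: "real d \<ge> 1" using d0 by simp
    have "1 * 1 \<le> real r * real d" using r0 d1 by (intro mult_mono) auto
    then have rd1: "real r * real d \<ge> 1" by simp
    have L0: "ln (R / (real r * real d)) \<ge> 0" using rd rd1 by simp
    have L1: "ln (R / (real r * real d)) \<le> ln R"
      using rd rd1 R1 by (simp add: divide_le_eq ln_div)
    have Lp: "(ln (R / (real r * real d))) ^ l \<le> (ln R) ^ l"
      using L1 L0 by (rule power_mono)
    show "real_of_int ((mu r)\<^sup>2) / ff1 H r * (ln (R / (real r * real d))) ^ l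
        \<le> (ln R) ^ l * (if squarefree r then F (prime_factors r) else 0)"
    proof (cases "squarefree r")
      case True
      have "real_of_int ((mu r)\<^sup>2) = 1" using mu_sq[of r] True by simp
      then have "real_of_int ((mu r)\<^sup>2) / ff1 H r = F (prime_factors r)"
        unfolding F_def using inv_ff1[of H r] by simp
      then have "real_of_int ((mu r)\<^sup>2) / ff1 H r * (ln (R / (real r * real d))) ^ l
          = F (prime_factors r) * (ln (R / (real r * real d))) ^ l" by simp
      also have "\<dots> \<le> F (prime_factors r) * (ln R) ^ l"
        using Lp Fnn'[of r] by (rule mult_left_mono)
      also have "\<dots> = (ln R) ^ l * (if squarefree r then F (prime_factors r) else 0)"
        using True by (simp add: mult.commute)
      finally show ?thesis .
    next
      case False
      have "real_of_int ((mu r)\<^sup>2) = 0" using mu_sq[of r] False by simp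
      then show ?thesis using False by simp
    qed
  qed
  also have "\<dots> = (ln R) ^ l * (\<Sum>r\<in>A'. F (prime_factors r))"
    unfolding A'_def sum.inter_filter[OF finA] sum_distrib_left ..
  finally have st1: "(\<Sum>r\<in>A. real_of_int ((mu r)\<^sup>2) / ff1 H r * (ln (R / (real r * real d))) ^ l)
      \<le> (ln R) ^ l * (\<Sum>r\<in>A'. F (prime_factors r))" .
  have "(\<Sum>r\<in>A'. F (prime_factors r)) = (\<Sum>S\<in>prime_factors ` A'. F S)"
  proof -
    have "inj_on prime_factors A'"
    proof (rule inj_onI)
      fix x y assume "x \<in> A'" "y \<in> A'" "prime_factors x = prime_factors y"
      have sx: "squarefree x" and sy: "squarefree y" using \<open>x \<in> A'\<close> \<open>y \<in> A'\<close> by (auto simp: A'_def)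
      have "x = \<Prod>(prime_factors x)" using squarefree_prod_pf[OF sx] by (rule sym)
      also have "\<dots> = \<Prod>(prime_factors y)" using \<open>prime_factors x = prime_factors y\<close> by (rule arg_cong)
      also have "\<dots> = y" by (rule squarefree_prod_pf[OF sy])
      finally show "x = y" .
    qed
    then show ?thesis by (simp only: sum.reindex comp_def)
  qed
  also have "(\<Sum>S\<in>prime_factors ` A'. F S) \<le> (\<Sum>S\<in>Pow T. F S)"
  proof (rule sum_mono2)
    show "finite (Pow T)" using finT by simp
    show "prime_factors ` A' \<subseteq> Pow T"
    proof
      fix S assume "S \<in> prime_factors ` A'"
      then obtain r where r: "r \<in> A'" "S = prime_factors r" by auto
      have rA: "r \<in> A" using r by (simp add: A'_def)
      have r0: "r > 0" using rA by (simp add: A_def)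
      have "S \<subseteq> T"
      proof
        fix p assume "p \<in> S"
        then have p: "prime p" "p dvd r" using r by auto
        have "p \<le> r" using dvd_imp_le[OF p(2) r0] .
        then have "p \<le> N" using rN[OF rA] by simp
        moreover have "\<not> p dvd d"
        proof
          assume "p dvd d"
          then have "p dvd gcd r d" using p by simp
          moreover have "coprime r d" using rA by (simp add: A_def)
          ultimately have "p dvd 1" by simp
          then have "p = 1" by simp
          then show False using p(1) by simp
        qed
        ultimately show "p \<in> T" using p unfolding T_def Pr_def by simp
      qed
      then show "S \<in> Pow T" by simp
    qed
    fix S assume "S \<in> Pow T - prime_factors ` A'"
    then show "0 \<le> F S" using Fnn by auto
  qed
  also have "(\<Sum>S\<in>Pow T. F S) = (\<Prod>p\<in>T. 1 + gg H p)"
  proof -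
    have "(\<Prod>p\<in>T. gg H p + 1) = (\<Sum>X\<in>Pow T. (\<Prod>p\<in>X. gg H p) * (\<Prod>p\<in>T - X. 1))"
      by (rule prod_add[OF finT])
    moreover have "(\<Prod>p\<in>T. 1 + gg H p) = (\<Prod>p\<in>T. gg H p + 1)" by (simp only: add.commute)
    moreover have "(\<Sum>X\<in>Pow T. (\<Prod>p\<in>X. gg H p) * (\<Prod>p\<in>T - X. 1)) = (\<Sum>X\<in>Pow T. F X)"
      unfolding F_def by simp
    ultimately show ?thesis by linarith
  qed
  finally have "(\<Sum>r\<in>A'. F (prime_factors r)) \<le> (\<Prod>p\<in>T. 1 + gg H p)" .
  then have "(ln R) ^ l * (\<Sum>r\<in>A'. F (prime_factors r)) \<le> (ln R) ^ l * (\<Prod>p\<in>T. 1 + gg H p)"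
    using lnR by (intro mult_left_mono) auto
  with st1 show ?thesis unfolding A_def T_def N_def by linarith
qed

lemma prod_le_superset:
  fixes f :: "'a \<Rightarrow> real"
  assumes "finite C" "B \<subseteq> C" "\<And>x. x \<in> C \<Longrightarrow> f x \<ge> 1"
  shows "prod f B \<le> prod f C"
proof -
  have "prod f C = prod f (C - B) * prod f B" by (rule prod.subset_diff[OF assms(2,1)])
  moreover have "prod f (C - B) \<ge> 1" using assms(3) by (intro prod_ge_1) auto
  moreover have "prod f B \<ge> 1" using assms(2,3) by (intro prod_ge_1) auto
  moreover have "1 * prod f B \<le> prod f (C - B) * prod f B"
    using calculation by (intro mult_right_mono) auto
  ultimately show ?thesis by linarith
qed

lemma combine_prod:
  assumes sq: "squarefree d" and dR: "real d < R" and adm: "admissible H"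
  shows "(\<Prod>p\<in>prime_factors d. 1 + gg H p) * (\<Prod>p\<in>{p\<in>Pr (nat \<lfloor>R\<rfloor>). \<not> p dvd d}. 1 + gg H p)
     \<le> (\<Prod>p\<in>Pr (nat \<lfloor>R\<rfloor>). 1 + gg H p)"
proof -
  define N where "N = nat \<lfloor>R\<rfloor>"
  define T where "T = {p\<in>Pr N. \<not> p dvd d}"
  have d0: "d > 0" using sq by (metis not_squarefree_0 gr0I)
  have dN: "d \<le> N"
  proof -
    have "int d \<le> \<lfloor>R\<rfloor>" using dR by linarith
    then show ?thesis unfolding N_def by linarith
  qed
  have sub1: "prime_factors d \<subseteq> Pr N"
  proof
    fix p assume "p \<in> prime_factors d"
    then have "prime p" "p dvd d" by auto
    moreover have "p \<le> d" using dvd_imp_le[OF \<open>p dvd d\<close> d0] .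
    ultimately show "p \<in> Pr N" using dN unfolding Pr_def by simp
  qed
  have sub2: "T \<subseteq> Pr N" unfolding T_def by auto
  have disj: "prime_factors d \<inter> T = {}" unfolding T_def by auto
  have "(\<Prod>p\<in>prime_factors d. 1 + gg H p) * (\<Prod>p\<in>T. 1 + gg H p) = (\<Prod>p\<in>prime_factors d \<union> T. 1 + gg H p)"
    by (rule prod.union_disjoint[symmetric]) (use disj in \<open>auto simp: T_def\<close>)
  also have "\<dots> \<le> (\<Prod>p\<in>Pr N. 1 + gg H p)"
  proof (rule prod_le_superset)
    show "finite (Pr N)" by simp
    show "prime_factors d \<union> T \<subseteq> Pr N" using sub1 sub2 by simp
    fix p assume "p \<in> Pr N"
    then have "prime p" by (simp add: Pr_def)
    then show "1 + gg H p \<ge> 1" using gg_nonneg[OF _ adm] by simp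
  qed
  finally show ?thesis unfolding T_def N_def .
qed

lemma Pn_times_G:
  assumes adm: "admissible H"
  shows "Pn H N * (\<Prod>p\<in>Pr N. 1 + gg H p) = (\<Prod>p\<in>Pr N. inverse (1 - 1 / real p)) ^ card H"
proof -
  have "Pn H N * (\<Prod>p\<in>Pr N. 1 + gg H p) = (\<Prod>p\<in>Pr N. fac H p * (1 + gg H p))"
    unfolding Pn_def by (rule prod.distrib[symmetric])
  also have "\<dots> = (\<Prod>p\<in>Pr N. inverse (1 - 1 / real p) ^ card H)"
  proof (rule prod.cong[OF refl])
    fix p assume "p \<in> Pr N"
    then have p: "prime p" by (simp add: Pr_def)
    have lt: "nu H p < p" using adm p unfolding admissible_def by auto
    then have pos: "real p - real (nu H p) > 0" by simp
    have p0: "real p > 0" using p prime_gt_0_nat by simp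
    have e1: "1 - real (nu H p) / real p = (real p - real (nu H p)) / real p"
      using p0 by (simp add: diff_divide_distrib)
    have e2: "(1 - real (nu H p) / real p) * (real p / (real p - real (nu H p))) = 1"
      unfolding e1 using pos p0 by simp
    have "fac H p * (1 + gg H p) = ((1 - real (nu H p) / real p) * (real p / (real p - real (nu H p)))) * inverse ((1 - 1 / real p) ^ card H)"
      unfolding fac_alt one_plus_gg[OF p adm] by (simp only: mult_ac)
    also have "\<dots> = inverse (1 - 1 / real p) ^ card H"
      unfolding e2 by (simp only: mult_1_left power_inverse)
    finally show "fac H p * (1 + gg H p) = inverse (1 - 1 / real p) ^ card H" .
  qed
  also have "\<dots> = (\<Prod>p\<in>Pr N. inverse (1 - 1 / real p)) ^ card H"
    by (rule prod_power_distrib[symmetric])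
  finally show ?thesis .
qed

lemma lam_sum_nonneg:
  assumes adm: "admissible H" and d0: "d > 0"
  shows "(\<Sum>r\<in>{r::nat. 0 < r \<and> real r < R / real d \<and> coprime r d}.
            real_of_int ((mu r)\<^sup>2) / ff1 H r * (ln (R / (real r * real d))) ^ l) \<ge> 0"
proof (rule sum_nonneg)
  fix r assume r: "r \<in> {r::nat. 0 < r \<and> real r < R / real d \<and> coprime r d}"
  have "ff1 H r \<ge> 0" unfolding ff1_def
  proof (rule prod_nonneg)
    fix p assume "p \<in> prime_factors r"
    then have "prime p" by auto
    then have "nu H p < p" using adm unfolding admissible_def by auto
    then show "(real p - real (nu H p)) / real (nu H p) \<ge> 0" by simp
  qed
  moreover have "real r * real d < R" using r d0 by (simp add: pos_less_divide_eq)
  moreover have "real r * real d \<ge> 1"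
  proof -
    have "real r \<ge> 1" "real d \<ge> 1" using r d0 by auto
    then have "1 * 1 \<le> real r * real d" by (intro mult_mono) auto
    then show ?thesis by simp
  qed
  ultimately have "ln (R / (real r * real d)) \<ge> 0" "ff1 H r \<ge> 0" by simp_all
  moreover have "real_of_int ((mu r)\<^sup>2) \<ge> 0" by simp
  ultimately show "real_of_int ((mu r)\<^sup>2) / ff1 H r * (ln (R / (real r * real d))) ^ l \<ge> 0"
    by simp
qed


theorem lemma9:
  fixes k :: nat
  assumes "k \<ge> 2"
  shows "\<exists>C::real. \<forall>H::int set. finite H \<and> card H = k \<and> admissible H \<longrightarrow>
           (\<exists>R0::real. \<forall>R::real. R \<ge> R0 \<and> R > 1 \<longrightarrow>
              (\<forall>l::nat. \<forall>d::nat. l \<le> k \<and> squarefree d \<and> real d < R \<longrightarrow>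
                 \<bar>lambda_w H R d l\<bar> \<le> C * (ln R) ^ (k + l)))"
proof (rule exI[of _ "mertQQ ^ k"], intro allI impI)
  fix H :: "int set"
  assume asm: "finite H \<and> card H = k \<and> admissible H"
  then have fin: "finite H" and cardH: "card H = k" and adm: "admissible H" by auto
  have ne: "H \<noteq> {}" using cardH assms by auto
  show "\<exists>R0::real. \<forall>R::real. R \<ge> R0 \<and> R > 1 \<longrightarrow>
              (\<forall>l::nat. \<forall>d::nat. l \<le> k \<and> squarefree d \<and> real d < R \<longrightarrow>
                 \<bar>lambda_w H R d l\<bar> \<le> mertQQ ^ k * (ln R) ^ (k + l))"
  proof (rule exI[of _ "real (bigM H) + 2"], intro allI impI)
    fix R :: real and l d :: nat
    assume R: "real (bigM H) + 2 \<le> R \<and> 1 < R"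
    assume ld: "l \<le> k \<and> squarefree d \<and> real d < R"
    then have sq: "squarefree d" and dR: "real d < R" by auto
    have d0: "d > 0" using sq by (metis not_squarefree_0 gr0I)
    define N where "N = nat \<lfloor>R\<rfloor>"
    have R1: "R > 1" using R by simp
    have NM: "N \<ge> bigM H + 2"
    proof -
      have "int (bigM H + 2) \<le> \<lfloor>R\<rfloor>" using R by (simp add: le_floor_iff)
      then show ?thesis unfolding N_def by linarith
    qed
    have NR: "real N \<le> R" unfolding N_def using R by linarith
    have N2: "N \<ge> 2" using NM by simp
    have lnN: "ln (real N) > 0" using N2 by simp
    have lnNR: "ln (real N) \<le> ln R" using NR N2 by simp
    have lnR: "ln R > 0" using R1 by simp
    define Q where "Q = ff H d / ff1 H d"
    define S where "S = sing_series H"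
    define Sm where "Sm = (\<Sum>r\<in>{r::nat. 0 < r \<and> real r < R / real d \<and> coprime r d}.
            real_of_int ((mu r)\<^sup>2) / ff1 H r * (ln (R / (real r * real d))) ^ l)"
    define GT where "GT = (\<Prod>p\<in>{p\<in>Pr N. \<not> p dvd d}. 1 + gg H p)"
    define G where "G = (\<Prod>p\<in>Pr N. 1 + gg H p)"
    define Mq where "Mq = (\<Prod>p\<in>Pr N. inverse (1 - 1 / real p))"
    have Qe: "Q = (\<Prod>p\<in>prime_factors d. 1 + gg H p)"
      unfolding Q_def by (rule ff_over_ff1[OF sq fin adm ne])
    have Q0: "Q \<ge> 0" unfolding Qe
    proof (rule prod_nonneg)
      fix p assume "p \<in> prime_factors d"
      then have "prime p" by (rule in_prime_factors_imp_prime)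
      then have "gg H p \<ge> 0" by (rule gg_nonneg[OF _ adm])
      then show "0 \<le> 1 + gg H p" by simp
    qed
    have S0: "S \<ge> 0" unfolding S_def by (rule sing_bounds(1)[OF fin adm])
    have SP: "S \<le> Pn H N" unfolding S_def by (rule sing_bounds(2)[OF fin adm]) (use NM in simp)
    have Sm0: "Sm \<ge> 0" unfolding Sm_def by (rule lam_sum_nonneg[OF adm d0])
    have SmB: "Sm \<le> (ln R) ^ l * GT" unfolding Sm_def GT_def N_def by (rule sum_bound[OF fin adm d0 R1])
    have GT0: "GT \<ge> 0" unfolding GT_def
      by (rule prod_nonneg) (use gg_nonneg[OF _ adm] in \<open>auto simp: Pr_def\<close>)
    have QGT: "Q * GT \<le> G" unfolding Qe GT_def G_def N_def by (rule combine_prod[OF sq dR adm])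
    have PG: "Pn H N * G = Mq ^ k" unfolding G_def Mq_def using Pn_times_G[OF adm, of N] cardH by simp
    have Mq: "Mq \<le> mertQQ * ln (real N)" unfolding Mq_def by (rule mertens3[OF N2])
    have Mq0: "Mq \<ge> 0" unfolding Mq_def
    proof (rule prod_nonneg)
      fix p assume "p \<in> Pr N"
      then have "real p \<ge> 2" using prime_ge_2_nat by (auto simp: Pr_def)
      then show "inverse (1 - 1 / real p) \<ge> 0" by simp
    qed
    have lamE: "lambda_w H R d l = real_of_int (mu d) * (Q * S / fact l * Sm)"
      unfolding lambda_w_def Q_def S_def Sm_def by (simp only: mult_ac times_divide_eq_left times_divide_eq_right)
    have Y0: "Q * S / fact l * Sm \<ge> 0" using Q0 S0 Sm0 by simp
    have "\<bar>lambda_w H R d l\<bar> = \<bar>real_of_int (mu d)\<bar> * (Q * S / fact l * Sm)"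
      unfolding lamE by (simp only: abs_mult[of "real_of_int (mu d)"] abs_of_nonneg[OF Y0])
    also have "\<dots> \<le> 1 * (Q * S / fact l * Sm)"
      using abs_mu_le[of d] Y0 by (rule mult_right_mono)
    also have "\<dots> \<le> Q * S * Sm"
    proof -
      have f1: "(fact l :: real) \<ge> 1" by simp
      have "Q * S * Sm \<ge> 0" using Q0 S0 Sm0 by simp
      then have "Q * S * Sm / fact l \<le> Q * S * Sm" using f1
        by (simp add: divide_le_eq mult_le_cancel_left1)
      then show ?thesis by simp
    qed
    also have "\<dots> \<le> Q * S * ((ln R) ^ l * GT)"
      using SmB Q0 S0 by (intro mult_left_mono) auto
    also have "\<dots> = S * (Q * GT) * (ln R) ^ l" by (simp only: mult_ac)
    also have "\<dots> \<le> Pn H N * G * (ln R) ^ l"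
    proof (intro mult_right_mono mult_mono SP QGT)
      show "0 \<le> Pn H N" using Pn_pos[OF adm] less_imp_le by blast
      show "0 \<le> Q * GT" using Q0 GT0 by simp
      show "0 \<le> ln R ^ l" using lnR by simp
    qed
    also have "\<dots> = Mq ^ k * (ln R) ^ l" unfolding PG ..
    also have "\<dots> \<le> (mertQQ * ln R) ^ k * (ln R) ^ l"
    proof (intro mult_right_mono power_mono)
      have "mertQQ * ln (real N) \<le> mertQQ * ln R"
        by (rule mult_left_mono[OF lnNR]) (simp add: mertQQ_def less_imp_le)
      then show "Mq \<le> mertQQ * ln R" using Mq by linarith
      show "0 \<le> Mq" by (rule Mq0)
      show "0 \<le> ln R ^ l" using lnR by simp
    qed
    also have "\<dots> = mertQQ ^ k * (ln R) ^ (k + l)" by (simp add: power_mult_distrib power_add)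
    finally show "\<bar>lambda_w H R d l\<bar> \<le> mertQQ ^ k * (ln R) ^ (k + l)" .
  qed
qed

end
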